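(* Let $\mathbb{K}$ be a field of characteristic zero and let $\mathbb{K}(x)[S_x]$ be the ring of linear recurrence operators, in which $S_x\, a(x) = a(x+1)\, S_x$ for $a\in\mathbb{K}(x)$. Let $m$ be a positive integer and let $L\in\mathbb{K}(x)[S_x]$ be nonzero, with $m$-exponent separation $L=L_0+L_1+\cdots+L_{m-1}$, where $L_i=\sum_{j=0}^{r_i}\ell_{i,j}S_x^{jm+i}$ with $\ell_{i,j}\in\mathbb{K}(x)$. Let $\mathcal{L}_m$ be the $m\times m$ matrix over $\mathbb{K}(x)[S_x]$ whose entry in row $i$ and column $j$ ($0\le i,j\le m-1$) is $L_{(i-j)\bmod m}$. Suppose $T_0,\ldots,T_{m-1}\in\mathbb{K}(x)[S_x]$ satisfy $[T_0,\ldots,T_{m-1}]\cdot\mathcal{L}_m=0$, i.e. $\sum_{i=0}^{m-1}T_i L_{(i-j)\bmod m}=0$ for every $j=0,\ldots,m-1$. Then $T_k=0$ for every $k=0,\ldots,m-1$.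
   Context: Products of operators are taken in the noncommutative ring $\mathbb{K}(x)[S_x]$, with row-vector entries multiplied on the left. *)

theory Defs
  imports "HOL-Computational_Algebra.Polynomial" "HOL-Computational_Algebra.Fraction_Field"
begin

text \<open>The rational function field K(x) is modelled as 'k poly fract.
  The shift automorphism sigma: a(x) maps to a(x+1).\<close>

definition rshift :: "'k::field poly fract \<Rightarrow> 'k poly fract" where
  "rshift f = (SOME g. \<exists>a b. b \<noteq> 0 \<and> f = Fract a b \<and>
       g = Fract (pcompose a [:1, 1:]) (pcompose b [:1, 1:]))"

text \<open>Recurrence operators in K(x)[S_x] are represented as polynomials in S_x
  with coefficients in K(x) (coeff i = coefficient of S_x^i, written on the left).
  Ore multiplication: (a S^i)(b S^j) = a sigma^i(b) S^(i+j).\<close>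

definition ore_mult :: "'k::field poly fract poly \<Rightarrow> 'k poly fract poly \<Rightarrow> 'k poly fract poly" where
  "ore_mult P Q = (\<Sum>i\<le>degree P. smult (coeff P i) (monom 1 i * map_poly (rshift ^^ i) Q))"

definition exp_part :: "nat \<Rightarrow> nat \<Rightarrow> 'k::field poly fract poly \<Rightarrow> 'k poly fract poly" where
  "exp_part m i L = Abs_poly (\<lambda>k. if k mod m = i then coeff L k else 0)"

end

theory Submission
  imports Defs
begin

lemma Fract_zero_iff: "b \<noteq> 0 \<Longrightarrow> (Fraction_Field.Fract (a::'a::idom) b = 0) \<longleftrightarrow> a = 0"
  by (metis Zero_fract_def eq_fract(1) mult_1_right mult_zero_left one_neq_zero)

lemma rshift_props:
  fixes f :: "'k::field poly fract"
  shows "(f = 0 \<longrightarrow> rshift f = 0) \<and> (f \<noteq> 0 \<longrightarrow> rshift f \<noteq> 0)"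
proof -
  let ?P = "\<lambda>g. \<exists>a b. b \<noteq> 0 \<and> f = Fract a b \<and>
       g = Fract (pcompose a [:1, 1:]) (pcompose b [:1, 1:])"
  obtain a b where ab: "f = Fract a b" "b \<noteq> 0" by (cases f)
  have "\<exists>g. ?P g" using ab by blast
  hence "?P (rshift f)" unfolding rshift_def by (rule someI_ex)
  then obtain a' b' where h: "b' \<noteq> 0" "f = Fract a' b'"
    "rshift f = Fract (pcompose a' [:1, 1:]) (pcompose b' [:1, 1:])" by blast
  have d: "degree [:1, 1::'k:] > 0" by simp
  have b2: "pcompose b' [:1, 1:] \<noteq> 0" using h(1) d pcompose_eq_0 by metis
  show ?thesis
  proof (intro conjI impI)
    assume "f = 0"
    then have "a' = 0" using h(1,2) Fract_zero_iff by metis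
    then show "rshift f = 0" using h(3) b2 by (simp add: Fract_zero_iff)
  next
    assume "f \<noteq> 0"
    then have "a' \<noteq> 0" using h(1,2) by (auto simp: Fract_zero_iff)
    then have "pcompose a' [:1, 1:] \<noteq> 0" using d pcompose_eq_0 by metis
    then show "rshift f \<noteq> 0" using h(3) b2 by (simp add: Fract_zero_iff)
  qed
qed

lemma rshift_zero: "rshift (0::'k::field poly fract) = 0"
  using rshift_props by blast

lemma rshift_pow_zero: "(rshift ^^ i) (0::'k::field poly fract) = 0"
  by (induction i) (auto simp: rshift_zero)

lemma rshift_pow_nz: "(f::'k::field poly fract) \<noteq> 0 \<Longrightarrow> (rshift ^^ i) f \<noteq> 0"
  by (induction i) (auto dest: rshift_props[THEN conjunct2, rule_format])

lemma coeff_ore_mult: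
  "coeff (ore_mult P Q) n = (\<Sum>i\<le>n. coeff P i * (rshift ^^ i) (coeff Q (n - i)))"
proof -
  define g where "g i = (if n < i then 0 else coeff P i * (rshift ^^ i) (coeff Q (n - i)))" for i
  have "coeff (ore_mult P Q) n = (\<Sum>i\<le>degree P. g i)"
    unfolding ore_mult_def g_def
    apply (simp add: coeff_sum coeff_monom_mult)
    apply (intro sum.cong refl)
    apply (simp add: coeff_map_poly rshift_pow_zero)
    done
  also have "\<dots> = (\<Sum>i\<le>max (degree P) n. g i)"
    by (rule sum.mono_neutral_left) (auto simp: g_def coeff_eq_0)
  also have "\<dots> = (\<Sum>i\<le>n. g i)"
    by (rule sum.mono_neutral_right) (auto simp: g_def coeff_eq_0)
  finally show ?thesis by (simp add: g_def)
qed

lemma coeff_exp_part: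
  "coeff (exp_part m b L) k = (if k mod m = b then coeff L k else 0)"
proof -
  have "\<forall>\<^sub>\<infinity> k. (if k mod m = b then coeff L k else 0) = 0"
    using MOST_coeff_eq_0[of L] by (auto elim: MOST_mono)
  then show ?thesis unfolding exp_part_def by (simp add: Abs_poly_inverse)
qed

lemma domain_lemma:
  fixes a :: "nat \<Rightarrow> 'k::field poly fract"
  assumes fin: "finite {i. a i \<noteq> 0}" and L: "L \<noteq> 0"
    and eq: "\<forall>n. (\<Sum>i\<le>n. a i * (rshift ^^ i) (coeff L (n - i))) = 0"
  shows "a i = 0"
proof (rule ccontr)
  assume "a i \<noteq> 0"
  define d where "d = Max {i. a i \<noteq> 0}"
  have ad: "a d \<noteq> 0" unfolding d_def using fin \<open>a i \<noteq> 0\<close>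
    by (metis (mono_tags) Max_in empty_iff mem_Collect_eq)
  have big: "\<And>k. k > d \<Longrightarrow> a k = 0" unfolding d_def using fin
    by (metis (mono_tags) Max_ge leD mem_Collect_eq)
  define e where "e = degree L"
  have "(\<Sum>i\<le>d+e. a i * (rshift ^^ i) (coeff L (d + e - i)))
      = (\<Sum>i\<le>d+e. if i = d then a d * (rshift ^^ d) (coeff L e) else 0)"
  proof (rule sum.cong[OF refl])
    fix i assume "i \<in> {..d+e}"
    show "a i * (rshift ^^ i) (coeff L (d + e - i)) = (if i = d then a d * (rshift ^^ d) (coeff L e) else 0)"
    proof (cases "i = d")
      case False
      then consider "i > d" | "i < d" by linarith
      then show ?thesis
      proof cases
        case 1 then show ?thesis using big by simp
      next
        case 2 then have "d + e - i > degree L" unfolding e_def by simp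
        then show ?thesis using False by (simp add: coeff_eq_0 rshift_pow_zero)
      qed
    qed simp
  qed
  also have "\<dots> = a d * (rshift ^^ d) (coeff L e)" by simp
  also have "\<dots> \<noteq> 0" using ad rshift_pow_nz[of "lead_coeff L" d] L unfolding e_def by simp
  finally show False using eq by blast
qed

lemma cond_equiv:
  fixes m s n i t :: nat
  assumes "m > 0" "t < m" "i \<le> n"
  shows "((n - i) mod m = nat ((int t - int (nat ((int s - int n) mod int m))) mod int m))
     \<longleftrightarrow> t = nat ((int s - int i) mod int m)"
proof -
  have m: "int m > 0" using assms by simp
  have l: "int ((n - i) mod m) = (int n - int i) mod int m" using assms(3)
    by (simp add: of_nat_diff zmod_int)
  have "((n - i) mod m = nat ((int t - int (nat ((int s - int n) mod int m))) mod int m))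
     \<longleftrightarrow> (int n - int i) mod int m = (int t - (int s - int n) mod int m) mod int m"
    using l m by (smt (verit) nat_int int_nat_eq pos_mod_sign)
  also have "\<dots> \<longleftrightarrow> (int n - int i) mod int m = (int t - (int s - int n)) mod int m"
    by (simp add: mod_diff_right_eq)
  also have "\<dots> \<longleftrightarrow> int m dvd (int n - int i) - (int t - (int s - int n))"
    by (simp add: mod_eq_dvd_iff)
  also have "\<dots> \<longleftrightarrow> int m dvd (int t - (int s - int i))"
    by (metis (no_types, opaque_lifting) diff_diff_eq2 diff_add_cancel dvd_minus_iff minus_diff_eq add.commute diff_diff_eq)
  also have "\<dots> \<longleftrightarrow> int t mod int m = (int s - int i) mod int m"
    by (simp add: mod_eq_dvd_iff)
  also have "\<dots> \<longleftrightarrow> t = nat ((int s - int i) mod int m)"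
    using assms(2) m by (smt (verit) nat_int int_nat_eq pos_mod_sign of_nat_mod mod_less)
  finally show ?thesis .
qed

theorem proposition4p2:
  fixes L :: "'k::field_char_0 poly fract poly"
    and T :: "nat \<Rightarrow> 'k poly fract poly"
    and m :: nat
  assumes "m > 0"
    and "L \<noteq> 0"
    and "\<forall>j<m. (\<Sum>i<m. ore_mult (T i) (exp_part m (nat ((int i - int j) mod int m)) L)) = 0"
  shows "\<forall>k<m. T k = 0"
proof -
  define idx where "idx s i = nat ((int s - int i) mod int m)" for s i :: nat
  have idx_lt: "idx s i < m" for s i using assms(1) unfolding idx_def
    by (simp add: nat_less_iff)
  define a where "a s i = coeff (T (idx s i)) i" for s i
  define D where "D = Max ((\<lambda>t. degree (T t)) ` {..<m})"
  have degD: "t < m \<Longrightarrow> degree (T t) \<le> D" for t unfolding D_def by simp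
  have key: "(\<Sum>i\<le>n. a s i * (rshift ^^ i) (coeff L (n - i))) = 0" for s n
  proof -
    define j where "j = nat ((int s - int n) mod int m)"
    have jm: "j < m" using assms(1) unfolding j_def by (simp add: nat_less_iff)
    have "0 = coeff (\<Sum>t<m. ore_mult (T t) (exp_part m (nat ((int t - int j) mod int m)) L)) n"
      using assms(3) jm by simp
    also have "\<dots> = (\<Sum>t<m. \<Sum>i\<le>n. coeff (T t) i * (rshift ^^ i)
        (if (n - i) mod m = nat ((int t - int j) mod int m) then coeff L (n - i) else 0))"
      by (simp add: coeff_sum coeff_ore_mult coeff_exp_part)
    also have "\<dots> = (\<Sum>i\<le>n. \<Sum>t<m. coeff (T t) i * (rshift ^^ i)
        (if (n - i) mod m = nat ((int t - int j) mod int m) then coeff L (n - i) else 0))"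
      by (rule sum.swap)
    also have "\<dots> = (\<Sum>i\<le>n. \<Sum>t<m. if t = idx s i then coeff (T t) i * (rshift ^^ i) (coeff L (n - i)) else 0)"
    proof (intro sum.cong refl)
      fix i t assume "i \<in> {..n}" "t \<in> {..<m}"
      then have "((n - i) mod m = nat ((int t - int j) mod int m)) \<longleftrightarrow> t = idx s i"
        using cond_equiv[OF assms(1), of t i n s] unfolding j_def idx_def by simp
      then show "coeff (T t) i * (rshift ^^ i)
        (if (n - i) mod m = nat ((int t - int j) mod int m) then coeff L (n - i) else 0) =
        (if t = idx s i then coeff (T t) i * (rshift ^^ i) (coeff L (n - i)) else 0)"
        by (simp add: rshift_pow_zero)
    qed
    also have "\<dots> = (\<Sum>i\<le>n. a s i * (rshift ^^ i) (coeff L (n - i)))"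
      using idx_lt by (simp add: a_def)
    finally show ?thesis by simp
  qed
  have fin: "finite {i. a s i \<noteq> 0}" for s
  proof (rule finite_subset[of _ "{..D}"])
    show "{i. a s i \<noteq> 0} \<subseteq> {..D}"
    proof
      fix i assume "i \<in> {i. a s i \<noteq> 0}"
      then have "coeff (T (idx s i)) i \<noteq> 0" by (simp add: a_def)
      then have "i \<le> degree (T (idx s i))" by (rule le_degree)
      then show "i \<in> {..D}" using degD[OF idx_lt[of s i]] by simp
    qed
  qed simp
  have az: "a s i = 0" for s i
    using domain_lemma[OF fin assms(2)] key by blast
  show ?thesis
  proof (intro allI impI)
    fix k assume k: "k < m"
    have "coeff (T k) i = 0" for i
    proof -
      have "idx (k + i) i = k" unfolding idx_def using k by simp
      then show ?thesis using az[of "k + i" i] by (simp add: a_def)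
    qed
    then show "T k = 0" by (simp add: poly_eq_iff)
  qed
qed

end
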